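(* Let $1 \le p < \infty$ and $n\ge1$. Then $$U(n,p) \le \prod_{k=1}^n w(k,p).$$
   Context: Let $q = 1/p$ (with $0^q=0$). For $n\ge 1$, $U(n,p)$ denotes the maximum of $\mathrm{per}(A)=\sum_{\sigma\in S_n}\prod_{i=1}^n a_{i\sigma(i)}$ over all real $n\times n$ matrices $A$ each of whose rows has $\ell_p$-norm equal to $1$. For $k\ge1$ let $\Delta_k=\{y\in\mathbb R^k: y_i\ge 0,\ \sum_i y_i=1\}$ be the set of stochastic vectors, and define $P_k(y) = \sum_{i=1}^k y_i^q \prod_{j\ne i}(1-y_j)^q$ for $y\in\Delta_k$. Then $w(k,p)=\max_{y\in\Delta_k} P_k(y)$. *)

theory Defs
  imports "HOL-Combinatorics.Permutations" Complex_Main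
begin

(* n x n real matrices are represented as functions nat => nat => real, indices 0..n-1 *)

definition per :: "nat \<Rightarrow> (nat \<Rightarrow> nat \<Rightarrow> real) \<Rightarrow> real" where
  "per n A = (\<Sum>\<sigma> | \<sigma> permutes {..<n}. \<Prod>i<n. A i (\<sigma> i))"

definition row_pnorm :: "real \<Rightarrow> nat \<Rightarrow> (nat \<Rightarrow> nat \<Rightarrow> real) \<Rightarrow> nat \<Rightarrow> real" where
  "row_pnorm p n A i = (\<Sum>j<n. \<bar>A i j\<bar> powr p) powr (1 / p)"

definition U :: "nat \<Rightarrow> real \<Rightarrow> real" where
  "U n p = Sup {per n A | A. \<forall>i<n. row_pnorm p n A i = 1}"

definition stoch :: "nat \<Rightarrow> (nat \<Rightarrow> real) set" where
  "stoch k = {y. (\<forall>i<k. y i \<ge> 0) \<and> (\<Sum>i<k. y i) = 1}"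

(* powr satisfies 0 powr q = 0 *)
definition Pk :: "nat \<Rightarrow> real \<Rightarrow> (nat \<Rightarrow> real) \<Rightarrow> real" where
  "Pk k p y = (\<Sum>i<k. y i powr (1 / p) * (\<Prod>j\<in>{..<k} - {i}. (1 - y j) powr (1 / p)))"

definition w :: "nat \<Rightarrow> real \<Rightarrow> real" where
  "w k p = Sup (Pk k p ` stoch k)"

end

theory Submission
  imports Defs
begin

lemma per_transpose: "per n A = per n (\<lambda>i j. A j i)"
proof -
  have "per n A = (\<Sum>\<sigma> | \<sigma> permutes {..<n}. \<Prod>i<n. A i (inv \<sigma> i))"
    unfolding per_def by (rule sum_permutations_inverse)
  also have "\<dots> = (\<Sum>\<sigma> | \<sigma> permutes {..<n}. \<Prod>i<n. A (\<sigma> i) i)"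
  proof (rule sum.cong[OF refl])
    fix \<sigma> assume "\<sigma> \<in> {\<sigma>. \<sigma> permutes {..<n}}"
    then have s: "\<sigma> permutes {..<n}" by simp
    have "(\<Prod>i<n. A i (inv \<sigma> i)) = (\<Prod>i<n. A (\<sigma> i) (inv \<sigma> (\<sigma> i)))"
      using prod.permute[OF s, of "\<lambda>i. A i (inv \<sigma> i)"] by (simp add: o_def)
    also have "\<dots> = (\<Prod>i<n. A (\<sigma> i) i)"
      using permutes_inverses(2)[OF s] by simp
    finally show "(\<Prod>i<n. A i (inv \<sigma> i)) = (\<Prod>i<n. A (\<sigma> i) i)" .
  qed
  finally show ?thesis unfolding per_def .
qed

lemma per_colperm:
  assumes t: "t permutes {..<n}"
  shows "per n (\<lambda>i j. A i (t j)) = per n A"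
  unfolding per_def
  using setum_permutations_compose_left[OF t, of "\<lambda>\<sigma>. \<Prod>i<n. A i (\<sigma> i)"]
  by (simp add: o_def)

lemma per_abs: "per n A \<le> per n (\<lambda>i j. \<bar>A i j\<bar>)"
proof -
  have "per n A \<le> \<bar>per n A\<bar>" by simp
  also have "\<dots> \<le> (\<Sum>\<sigma> | \<sigma> permutes {..<n}. \<bar>\<Prod>i<n. A i (\<sigma> i)\<bar>)"
    unfolding per_def by (rule sum_abs)
  also have "\<dots> = per n (\<lambda>i j. \<bar>A i j\<bar>)"
    unfolding per_def by (simp add: abs_prod)
  finally show ?thesis .
qed

lemma per_scale_rows: "per n (\<lambda>i j. c i * A i j) = (\<Prod>i<n. c i) * per n A"
  unfolding per_def by (simp add: prod.distrib sum_distrib_left)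

lemma per_zero_row:
  assumes "i < n" "\<forall>j<n. A i j = 0"
  shows "per n A = 0"
  unfolding per_def
proof (rule sum.neutral, intro ballI)
  fix \<sigma> assume "\<sigma> \<in> {\<sigma>. \<sigma> permutes {..<n}}"
  then have s: "\<sigma> permutes {..<n}" by simp
  have "\<sigma> i < n" using permutes_in_image[OF s] assms(1) by simp
  then have "A i (\<sigma> i) = 0" using assms by simp
  then show "(\<Prod>i<n. A i (\<sigma> i)) = 0"
    using assms(1) by (intro prod_zero) auto
qed

lemma per_expand_row:
  "per (Suc n) A = (\<Sum>b<Suc n. A n b * per n (\<lambda>i j. A i (transpose n b j)))"
proof -
  have ins: "{..<Suc n} = insert n {..<n}" by auto
  have "per (Suc n) A = (\<Sum>b\<in>insert n {..<n}. \<Sum>q | q permutes {..<n}.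
      \<Prod>i\<in>insert n {..<n}. A i ((transpose n b \<circ> q) i))"
    unfolding per_def ins
    by (rule sum_over_permutations_insert) auto
  also have "\<dots> = (\<Sum>b\<in>insert n {..<n}. \<Sum>q | q permutes {..<n}.
      A n b * (\<Prod>i<n. A i (transpose n b (q i))))"
  proof (intro sum.cong refl)
    fix b q assume "q \<in> {q. q permutes {..<n}}"
    then have q: "q permutes {..<n}" by simp
    have "q n = n" using permutes_not_in[OF q] by simp
    then show "(\<Prod>i\<in>insert n {..<n}. A i ((transpose n b \<circ> q) i)) =
      A n b * (\<Prod>i<n. A i (transpose n b (q i)))"
      by (simp add: prod.insert)
  qed
  also have "\<dots> = (\<Sum>b<Suc n. A n b * per n (\<lambda>i j. A i (transpose n b j)))"
    unfolding per_def ins by (simp add: sum_distrib_left)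
  finally show ?thesis .
qed

lemma weier:
  fixes v :: "nat \<Rightarrow> real"
  assumes "finite S" "\<forall>i\<in>S. 0 \<le> v i \<and> v i \<le> 1"
  shows "1 - (\<Sum>i\<in>S. 1 - v i) \<le> (\<Prod>i\<in>S. v i)"
  using assms
proof (induction S rule: finite_induct)
  case empty then show ?case by simp
next
  case (insert a S)
  let ?s = "\<Sum>i\<in>S. 1 - v i" and ?P = "\<Prod>i\<in>S. v i"
  have ih: "1 - ?s \<le> ?P" using insert by auto
  have va: "0 \<le> v a" "v a \<le> 1" using insert by auto
  have s0: "0 \<le> ?s" using insert by (intro sum_nonneg) auto
  have "v a * (1 - ?s) \<le> v a * ?P" using ih va by (intro mult_left_mono) auto
  moreover have "v a - ?s \<le> v a * (1 - ?s)" using va s0 by (simp add: algebra_simps mult_left_le_one_le)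
  ultimately show ?case using insert by simp
qed

lemma Pk_nonneg: "0 \<le> Pk m p y"
  unfolding Pk_def by (intro sum_nonneg mult_nonneg_nonneg prod_nonneg) auto

lemma stoch_le1: "y \<in> stoch m \<Longrightarrow> i < m \<Longrightarrow> 0 \<le> y i \<and> y i \<le> 1"
proof -
  assume y: "y \<in> stoch m" and i: "i < m"
  then have "y i \<le> (\<Sum>j<m. y j)" by (intro member_le_sum) (auto simp: stoch_def)
  then show ?thesis using y i by (auto simp: stoch_def)
qed

lemma Pk_bdd: "0 \<le> p \<Longrightarrow> bdd_above (Pk m p ` stoch m)"
proof (rule bdd_aboveI2)
  assume p: "0 \<le> p"
  fix y assume y: "y \<in> stoch m"
  have "Pk m p y \<le> (\<Sum>i<m. 1)"
    unfolding Pk_def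
  proof (rule sum_mono)
    fix i assume "i \<in> {..<m}"
    then have a: "y i powr (1/p) \<le> 1" using stoch_le1[OF y] p by (intro powr_le1) auto
    have b: "(\<Prod>j\<in>{..<m} - {i}. (1 - y j) powr (1 / p)) \<le> 1"
      using stoch_le1[OF y] p by (intro prod_le_1) (auto intro!: powr_le1)
    show "y i powr (1 / p) * (\<Prod>j\<in>{..<m} - {i}. (1 - y j) powr (1 / p)) \<le> 1"
      using a b by (intro mult_le_one) (auto intro: prod_nonneg)
  qed
  then show "Pk m p y \<le> real m" by simp
qed

lemma w_upper: "0 \<le> p \<Longrightarrow> y \<in> stoch m \<Longrightarrow> Pk m p y \<le> w m p"
  unfolding w_def by (rule cSup_upper) (auto simp: Pk_bdd)

lemma e_stoch: "b < m \<Longrightarrow> (\<lambda>i. if i = b then 1 else 0) \<in> stoch m"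
  unfolding stoch_def by auto

lemma w_nonneg: "0 \<le> p \<Longrightarrow> 1 \<le> m \<Longrightarrow> 0 \<le> w m p"
  using w_upper[OF _ e_stoch[of 0 m]] Pk_nonneg[of m p] by (meson less_le_trans order_trans zero_less_one)

lemma Pk_e: assumes "b < m" shows "Pk m p (\<lambda>i. if i = b then 1 else 0) = 1"
proof -
  have "Pk m p (\<lambda>i. if i = b then 1 else 0) =
    (\<Sum>i<m. if i = b then 1 else 0)"
    unfolding Pk_def
  proof (intro sum.cong refl)
    fix i assume "i \<in> {..<m}"
    show "(if i = b then 1 else 0) powr (1 / p) *
         (\<Prod>j\<in>{..<m} - {i}. (1 - (if j = b then 1 else 0)) powr (1 / p)) =
         (if i = b then 1 else (0::real))"
      by (cases "i = b") (auto intro!: prod.neutral)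
  qed
  also have "\<dots> = 1" using assms by simp
  finally show ?thesis .
qed

lemma Pk_le_w:
  assumes m: "1 \<le> m" and p: "0 < p" and x: "\<forall>i<m. 0 \<le> x i \<and> x i \<le> 1"
    and s: "(\<Sum>i<m. x i) \<le> 1"
  shows "Pk m p x \<le> w m p"
proof (cases "(\<Sum>i<m. x i) = 1")
  case True
  then have "x \<in> stoch m" using x by (auto simp: stoch_def)
  then show ?thesis using w_upper p by auto
next
  case False
  then have s1: "(\<Sum>i<m. x i) < 1" using s by simp
  show ?thesis
  proof (cases "\<exists>a<m. \<exists>b<m. a \<noteq> b \<and> 0 < x a \<and> 0 < x b")
    case False
    have "Pk m p x \<le> 1"
    proof (cases "\<exists>b<m. 0 < x b")
      case True
      then obtain b where b: "b < m" "0 < x b" by auto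
      have oth: "\<forall>i<m. i \<noteq> b \<longrightarrow> x i = 0" using False b x by force
      have "Pk m p x \<le> (\<Sum>i<m. if i = b then 1 else 0)"
        unfolding Pk_def
      proof (rule sum_mono)
        fix i assume i: "i \<in> {..<m}"
        show "x i powr (1 / p) * (\<Prod>j\<in>{..<m} - {i}. (1 - x j) powr (1 / p))
              \<le> (if i = b then 1 else 0)"
        proof (cases "i = b")
          case True
          have a: "x i powr (1/p) \<le> 1" using x i p by (intro powr_le1) auto
          have c: "(\<Prod>j\<in>{..<m} - {i}. (1 - x j) powr (1 / p)) \<le> 1"
            using x p by (intro prod_le_1) (auto intro!: powr_le1)
          show ?thesis using a c True by (auto intro!: mult_le_one prod_nonneg)
        next
          case False
          then show ?thesis using oth i by simp
        qed
      qed
      then show ?thesis using b by simp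
    next
      case False
      then have "\<forall>i<m. x i = 0" using x by force
      then show ?thesis unfolding Pk_def by simp
    qed
    also have "\<dots> = Pk m p (\<lambda>i. if i = 0 then 1 else 0)" using Pk_e[of 0 m p] m by simp
    also have "\<dots> \<le> w m p" using w_upper[OF _ e_stoch[of 0 m]] p m by simp
    finally show ?thesis .
  next
    case True
    then obtain a b where ab: "a < m" "b < m" "a \<noteq> b" "0 < x a" "0 < x b" by auto
    define h where "h D = (\<Sum>i<m. D * x i / (1 + x i * (D - 1)))" for D :: real
    define M where "M = 1 / x a + 1 / x b"
    have xa1: "1 \<le> 1 / x a" using ab x by simp
    have xb1: "1 \<le> 1 / x b" using ab x by simp
    have M1: "1 \<le> M" using xa1 xb1 by (simp add: M_def)
    have h1: "h 1 \<le> 1" using s by (simp add: h_def)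
    have half: "1/2 \<le> M * x c / (1 + x c * (M - 1))" if c: "c < m" "0 < x c" and Mc: "1 \<le> M * x c" for c
    proof -
      have den: "0 < 1 + x c * (M - 1)" using M1 x c by (smt (verit) mult_nonneg_nonneg)
      have "1 + x c * (M - 1) \<le> 2 * (M * x c)" using Mc x c by (simp add: algebra_simps)
      then show ?thesis using den by (simp add: divide_simps)
    qed
    have Ma: "1 \<le> M * x a" using ab x by (simp add: M_def algebra_simps)
    have Mb: "1 \<le> M * x b" using ab x by (simp add: M_def algebra_simps)
    have tnn: "0 \<le> D * x i / (1 + x i * (D - 1))" if "1 \<le> D" "i < m" for D i
      using that x by (intro divide_nonneg_nonneg mult_nonneg_nonneg) (auto simp: add_nonneg_nonneg)
    have hM: "1 \<le> h M"
    proof -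
      have "(\<Sum>i\<in>{a,b}. M * x i / (1 + x i * (M - 1))) \<le> h M"
        unfolding h_def using ab tnn[OF M1] by (intro sum_mono2) auto
      moreover have "1 \<le> (\<Sum>i\<in>{a,b}. M * x i / (1 + x i * (M - 1)))"
      proof -
        have "(\<Sum>i\<in>{a,b}. M * x i / (1 + x i * (M - 1))) =
          M * x a / (1 + x a * (M - 1)) + M * x b / (1 + x b * (M - 1))" using ab(3) by simp
        then show ?thesis using half[OF ab(1) ab(4) Ma] half[OF ab(2) ab(5) Mb] by linarith
      qed
      ultimately show ?thesis by simp
    qed
    have cont: "continuous_on {1..M} h"
      unfolding h_def
    proof (intro continuous_intros ballI)
      fix D i assume "D \<in> {1..M}" "i \<in> {..<m}"
      then show "1 + x i * (D - 1) \<noteq> 0" using x by (smt (verit) mult_nonneg_nonneg atLeastAtMost_iff lessThan_iff)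
    qed
    obtain D where D: "1 \<le> D" "D \<le> M" "h D = 1" using IVT'[OF h1 hM M1 cont] by auto
    define u where "u i = 1 + x i * (D - 1)" for i
    define y where "y i = D * x i / u i" for i
    have u1: "1 \<le> u i" if "i < m" for i using D x that by (simp add: u_def)
    have upos: "0 < u i" if "i < m" for i using u1[OF that] by simp
    have ysum: "(\<Sum>i<m. y i) = 1" using D by (simp add: y_def u_def h_def)
    have ynn: "0 \<le> y i" if "i < m" for i unfolding y_def u_def using tnn[OF D(1) that] .
    have ys: "y \<in> stoch m" using ysum ynn by (simp add: stoch_def)
    have key1: "1 - y i = (1 - x i) / u i" if "i < m" for i
      using upos[OF that] by (simp add: y_def field_simps) (simp add: u_def algebra_simps)
    have key2: "(\<Sum>i<m. 1 - 1 / u i) = (D - 1) / D"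
    proof -
      have "(\<Sum>i<m. 1 - 1 / u i) = (\<Sum>i<m. (D - 1) / D * y i)"
      proof (intro sum.cong refl)
        fix i assume "i \<in> {..<m}"
        then have "0 < u i" using upos by simp
        then show "1 - 1 / u i = (D - 1) / D * y i"
          using D by (simp add: y_def field_simps) (simp add: u_def algebra_simps)
      qed
      also have "\<dots> = (D - 1) / D" using ysum by (simp only: sum_distrib_left[symmetric])
      finally show ?thesis .
    qed
    have prodpos: "0 < (\<Prod>i<m. u i)" using upos by (intro prod_pos) auto
    have "1 - (\<Sum>i<m. 1 - 1 / u i) \<le> (\<Prod>i<m. 1 / u i)"
    proof (rule weier)
      show "\<forall>i\<in>{..<m}. 0 \<le> 1 / u i \<and> 1 / u i \<le> 1"
      proof
        fix i assume "i \<in> {..<m}"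
        then have "1 \<le> u i" using u1 by simp
        then show "0 \<le> 1 / u i \<and> 1 / u i \<le> 1" by simp
      qed
    qed simp
    then have "1 / D \<le> 1 / (\<Prod>i<m. u i)"
      using D key2 by (simp add: prod_dividef field_simps)
    then have produ: "(\<Prod>i<m. u i) \<le> D" using prodpos D by (simp add: divide_simps)
    let ?q = "1 / p"
    have key3: "Pk m p y = (D powr ?q / (\<Prod>i<m. u i) powr ?q) * Pk m p x"
      unfolding Pk_def sum_distrib_left
    proof (intro sum.cong refl)
      fix i assume i: "i \<in> {..<m}"
      have pr: "(\<Prod>j\<in>{..<m} - {i}. (1 - y j) powr ?q) =
          (\<Prod>j\<in>{..<m} - {i}. (1 - x j) powr ?q) / (\<Prod>j\<in>{..<m} - {i}. u j powr ?q)"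
        by (simp add: key1 powr_divide prod_dividef)
      have pu: "(\<Prod>i<m. u i) powr ?q = u i powr ?q * (\<Prod>j\<in>{..<m} - {i}. u j powr ?q)"
        using i by (simp add: prod.remove powr_mult prod_powr_distrib)
      have uq: "0 < u i powr ?q" using upos[of i] i by simp
      have pq: "0 < (\<Prod>j\<in>{..<m} - {i}. u j powr ?q)"
        by (intro prod_pos) (use upos in force)
      show "y i powr ?q * (\<Prod>j\<in>{..<m} - {i}. (1 - y j) powr ?q) =
        D powr ?q / (\<Prod>i<m. u i) powr ?q * (x i powr ?q * (\<Prod>j\<in>{..<m} - {i}. (1 - x j) powr ?q))"
        unfolding pr pu using uq pq by (simp add: y_def powr_divide powr_mult field_simps)
    qed
    have "(\<Prod>i<m. u i) powr ?q \<le> D powr ?q"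
      using produ prodpos p by (intro powr_mono2) auto
    moreover have "0 < (\<Prod>i<m. u i) powr ?q"
    proof -
      have "(\<Prod>i<m. u i) \<noteq> 0" using prodpos by linarith
      then show ?thesis using powr_gt_zero by blast
    qed
    ultimately have r1: "1 \<le> D powr ?q / (\<Prod>i<m. u i) powr ?q" by simp
    have "Pk m p x \<le> Pk m p y"
      unfolding key3 using mult_right_mono[OF r1 Pk_nonneg[of m p x]] by simp
    also have "\<dots> \<le> w m p" using w_upper[OF _ ys] p by simp
    finally show ?thesis .
  qed
qed

lemma rownorm_eq1:
  assumes p: "0 < p"
  shows "row_pnorm p n A i = 1 \<longleftrightarrow> (\<Sum>j<n. \<bar>A i j\<bar> powr p) = 1"
proof
  let ?s = "\<Sum>j<n. \<bar>A i j\<bar> powr p"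
  assume h: "row_pnorm p n A i = 1"
  have s0: "0 \<le> ?s" by (intro sum_nonneg) auto
  have "?s = (?s powr (1/p)) powr p" using p s0 by (simp add: powr_powr)
  also have "\<dots> = 1" using h by (simp add: row_pnorm_def)
  finally show "?s = 1" .
next
  assume "(\<Sum>j<n. \<bar>A i j\<bar> powr p) = 1"
  then show "row_pnorm p n A i = 1" by (simp add: row_pnorm_def)
qed

lemma per_hom:
  assumes IH: "\<forall>A. (\<forall>i<n. row_pnorm p n A i = 1) \<longrightarrow> per n A \<le> W"
    and W: "0 \<le> W" and p: "0 < p"
  shows "per n B \<le> W * (\<Prod>i<n. row_pnorm p n B i)"
proof (cases "\<exists>i<n. row_pnorm p n B i = 0")
  case True
  then obtain i where i: "i < n" "row_pnorm p n B i = 0" by auto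
  then have "(\<Sum>j<n. \<bar>B i j\<bar> powr p) = 0" by (simp add: row_pnorm_def)
  then have "\<forall>j\<in>{..<n}. \<bar>B i j\<bar> powr p = 0" by (subst sum_nonneg_eq_0_iff[symmetric]) auto
  then have "\<forall>j<n. B i j = 0" by simp
  then have "per n B = 0" using per_zero_row[OF i(1)] by blast
  moreover have "(\<Prod>i<n. row_pnorm p n B i) = 0" by (rule prod_zero) (use i in auto)
  ultimately show ?thesis by (metis mult_zero_right order_refl)
next
  case False
  define r where "r i = row_pnorm p n B i" for i
  have rpos: "0 < r i" if "i < n" for i
    using False that by (simp add: r_def row_pnorm_def)
  define B' where "B' i j = B i j / r i" for i j
  have rp: "r i powr p = (\<Sum>j<n. \<bar>B i j\<bar> powr p)" for i
    using p by (simp add: r_def row_pnorm_def powr_powr sum_nonneg)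
  have "\<forall>i<n. row_pnorm p n B' i = 1"
  proof (intro allI impI)
    fix i assume i: "i < n"
    have "(\<Sum>j<n. \<bar>B' i j\<bar> powr p) = (\<Sum>j<n. \<bar>B i j\<bar> powr p) / r i powr p"
      using rpos[OF i] by (simp add: B'_def powr_divide sum_divide_distrib)
    also have "\<dots> = 1"
    proof -
      have "r i powr p \<noteq> 0" using rpos[OF i] by simp
      then show ?thesis using rp[of i] by simp
    qed
    finally show "row_pnorm p n B' i = 1" using rownorm_eq1[OF p] by blast
  qed
  then have "per n B' \<le> W" using IH by blast
  moreover have "per n B = (\<Prod>i<n. r i) * per n B'"
  proof -
    have "per n B = per n (\<lambda>i j. r i * B' i j)"
      unfolding per_def B'_def
      by (intro sum.cong prod.cong refl) (use rpos in \<open>force\<close>)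
    then show ?thesis by (simp add: per_scale_rows)
  qed
  moreover have "0 \<le> (\<Prod>i<n. r i)" by (intro prod_nonneg) (simp add: r_def row_pnorm_def)
  ultimately show ?thesis unfolding r_def by (metis mult_right_mono mult.commute)
qed

lemma per_0: "per 0 A = 1"
  unfolding per_def by simp

lemma step:
  assumes IH: "\<forall>A. (\<forall>i<n. row_pnorm p n A i = 1) \<longrightarrow> per n A \<le> W"
    and W: "0 \<le> W" and p: "0 < p"
    and A: "\<forall>i<Suc n. row_pnorm p (Suc n) A i = 1"
  shows "per (Suc n) A \<le> W * w (Suc n) p"
proof -
  let ?N = "Suc n"
  let ?q = "1 / p"
  have rows: "(\<Sum>j<?N. \<bar>A i j\<bar> powr p) = 1" if "i < ?N" for i
    using A that rownorm_eq1[OF p] by blast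
  have "\<exists>c<?N. (\<Sum>i<?N. \<bar>A i c\<bar> powr p) \<le> 1"
  proof (rule ccontr)
    assume "\<not> ?thesis"
    then have "\<forall>c\<in>{..<?N}. 1 < (\<Sum>i<?N. \<bar>A i c\<bar> powr p)" by auto
    then have "(\<Sum>c<?N. (1::real)) < (\<Sum>c<?N. \<Sum>i<?N. \<bar>A i c\<bar> powr p)"
      by (intro sum_strict_mono) auto
    also have "\<dots> = (\<Sum>i<?N. \<Sum>c<?N. \<bar>A i c\<bar> powr p)" by (rule sum.swap)
    also have "\<dots> = (\<Sum>i<?N. (1::real))" using rows by simp
    finally show False by simp
  qed
  then obtain c where c: "c < ?N" "(\<Sum>i<?N. \<bar>A i c\<bar> powr p) \<le> 1" by auto
  define t where "t = transpose c n"
  have t: "t permutes {..<?N}" unfolding t_def using c by (intro permutes_swap_id) auto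
  have tn: "t n = c" by (simp add: t_def)
  define C where "C i j = \<bar>A i (t j)\<bar>" for i j
  have Cnn: "0 \<le> C i j" for i j by (simp add: C_def)
  have Ceq: "C = (\<lambda>i j. \<bar>A i (t j)\<bar>)" by (simp add: C_def fun_eq_iff)
  have perAC: "per ?N A \<le> per ?N C"
    using per_abs[of ?N A] per_colperm[OF t, of "\<lambda>i j. \<bar>A i j\<bar>"] by (simp add: Ceq)
  have Crows: "(\<Sum>j<?N. C i j powr p) = 1" if "i < ?N" for i
  proof -
    have "(\<Sum>j<?N. C i j powr p) = (\<Sum>j<?N. \<bar>A i j\<bar> powr p)"
      using sum.permute[OF t, of "\<lambda>j. \<bar>A i j\<bar> powr p"] by (simp add: C_def o_def)
    then show ?thesis using rows[OF that] by simp
  qed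
  define x where "x k = C k n powr p" for k
  have xc: "x k = \<bar>A k c\<bar> powr p" for k by (simp add: x_def C_def tn)
  have x01: "\<forall>i<?N. 0 \<le> x i \<and> x i \<le> 1"
  proof (intro allI impI conjI)
    fix i assume i: "i < ?N"
    show "0 \<le> x i" by (simp add: x_def)
    have "x i \<le> (\<Sum>j<?N. C i j powr p)" unfolding x_def by (intro member_le_sum) auto
    then show "x i \<le> 1" using Crows[OF i] by simp
  qed
  have xs: "(\<Sum>i<?N. x i) \<le> 1" using c by (simp add: xc)
  have Cx: "C b n = x b powr ?q" for b
    using p Cnn[of b n] by (simp add: x_def powr_powr)
  have "per ?N C = per ?N (\<lambda>i j. C j i)" by (rule per_transpose)
  also have "\<dots> = (\<Sum>b<?N. C b n * per n (\<lambda>i j. C (transpose n b j) i))"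
    by (rule per_expand_row)
  also have "\<dots> = (\<Sum>b<?N. C b n * per n (\<lambda>i j. C (transpose n b i) j))"
    by (subst per_transpose) simp
  also have "\<dots> \<le> (\<Sum>b<?N. x b powr ?q * (W * (\<Prod>k\<in>{..<?N} - {b}. (1 - x k) powr ?q)))"
  proof (rule sum_mono)
    fix b assume b: "b \<in> {..<?N}"
    define tb where "tb = transpose n b"
    have tbp: "tb permutes {..<?N}" unfolding tb_def using b by (intro permutes_swap_id) auto
    define Bb where "Bb i j = C (tb i) j" for i j
    have "per n Bb \<le> W * (\<Prod>i<n. row_pnorm p n Bb i)"
      by (rule per_hom[OF IH W p])
    also have "(\<Prod>i<n. row_pnorm p n Bb i) = (\<Prod>i<n. (1 - x (tb i)) powr ?q)"
    proof (intro prod.cong refl)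
      fix i assume i: "i \<in> {..<n}"
      have ti: "tb i < ?N" using permutes_in_image[OF tbp, of i] i by simp
      have "(\<Sum>j<n. \<bar>Bb i j\<bar> powr p) = (\<Sum>j<?N. C (tb i) j powr p) - C (tb i) n powr p"
        by (simp add: Bb_def Cnn)
      also have "\<dots> = 1 - x (tb i)" using Crows[OF ti] by (simp add: x_def)
      finally show "row_pnorm p n Bb i = (1 - x (tb i)) powr ?q"
        by (simp add: row_pnorm_def)
    qed
    also have "\<dots> = (\<Prod>k\<in>{..<?N} - {b}. (1 - x k) powr ?q)"
    proof -
      have inj: "inj tb" using permutes_inj[OF tbp] .
      have "tb ` {..<n} = tb ` ({..<?N} - {n})" by (metis lessThan_Suc Diff_insert_absorb lessThan_iff less_irrefl)
      also have "\<dots> = tb ` {..<?N} - tb ` {n}" by (rule image_set_diff[OF inj])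
      also have "\<dots> = {..<?N} - {b}" using permutes_image[OF tbp] by (simp add: tb_def)
      finally have im: "tb ` {..<n} = {..<?N} - {b}" .
      show ?thesis
        unfolding im[symmetric] using prod.reindex[OF inj_on_subset[OF inj subset_UNIV], of "\<lambda>k. (1 - x k) powr ?q" "{..<n}"]
        by (simp add: o_def)
    qed
    finally have "per n Bb \<le> W * (\<Prod>k\<in>{..<?N} - {b}. (1 - x k) powr ?q)" .
    then show "C b n * per n (\<lambda>i j. C (transpose n b i) j)
        \<le> x b powr ?q * (W * (\<Prod>k\<in>{..<?N} - {b}. (1 - x k) powr ?q))"
      unfolding Cx[symmetric] Bb_def tb_def using Cnn[of b n] by (intro mult_left_mono) auto
  qed
  also have "\<dots> = W * Pk ?N p x"
    unfolding Pk_def sum_distrib_left by (intro sum.cong refl) (simp add: algebra_simps)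
  also have "\<dots> \<le> W * w ?N p"
    using Pk_le_w[OF _ p x01 xs] W by (intro mult_left_mono) auto
  finally show ?thesis using perAC by simp
qed

lemma main:
  assumes p: "0 < p"
  shows "\<forall>A. (\<forall>i<n. row_pnorm p n A i = 1) \<longrightarrow> per n A \<le> (\<Prod>k=1..n. w k p)"
proof (induction n)
  case 0
  then show ?case by (simp add: per_0)
next
  case (Suc n)
  have W: "0 \<le> (\<Prod>k=1..n. w k p)" using p by (intro prod_nonneg) (auto intro: w_nonneg)
  have eq: "(\<Prod>k=1..Suc n. w k p) = (\<Prod>k=1..n. w k p) * w (Suc n) p"
    by (simp add: prod.nat_ivl_Suc')
  show ?case unfolding eq using step[OF Suc W p] by blast
qed

theorem theorem2p1:
  fixes n :: nat and p :: real
  assumes "1 \<le> p" and "1 \<le> n"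
  shows "U n p \<le> (\<Prod>k=1..n. w k p)"
proof -
  have p: "0 < p" using assms by simp
  define I where "I = (\<lambda>i j::nat. if i = j then 1 else (0::real))"
  have "\<forall>i<n. row_pnorm p n I i = 1"
  proof (intro allI impI)
    fix i assume i: "i < n"
    have "(\<Sum>j<n. \<bar>I i j\<bar> powr p) = (\<Sum>j<n. if j = i then 1 else 0)"
      by (intro sum.cong refl) (auto simp: I_def)
    also have "\<dots> = 1" using i by simp
    finally show "row_pnorm p n I i = 1" using rownorm_eq1[OF p] by blast
  qed
  then have ne: "{per n A | A. \<forall>i<n. row_pnorm p n A i = 1} \<noteq> {}" by blast
  show ?thesis
    unfolding U_def
    by (rule cSup_least[OF ne]) (use main[OF p, of n] in blast)
qed

end
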